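(* Let $\theta\in[0,\pi[$, let $A$ be a non-empty line segment of length $l(A)$, let $(h(n))_n$ be a sequence of positive reals, and let $f$ be a lower semi-continuous function from $[\theta-\pi/2,\theta+\pi/2]$ to $\mathbb{R}^+\cup\{+\infty\}$. Let $\mathcal{D}_n=[\theta-\arctan(2h(n)/(nl(A))),\theta+\arctan(2h(n)/(nl(A)))]$ and $\underline{\mathcal{D}}=\bigcup_{N\ge1}\bigcap_{n\ge N}\mathcal{D}_n$. Then $$\limsup_{n\to\infty}\inf_{\widetilde\theta\in\mathcal{D}_n}f(\widetilde\theta)\geq\inf_{\widetilde\theta\in \mathrm{cl}(\underline{\mathcal{D}})}f(\widetilde\theta),$$ where $\mathrm{cl}(\underline{\mathcal{D}})$ is the closure of $\underline{\mathcal{D}}$. *)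

theory Defs
  imports "HOL-Analysis.Analysis" "HOL-Library.Extended_Nonnegative_Real"
begin

definition lower_semicontinuous_on :: "'a::topological_space set \<Rightarrow> ('a \<Rightarrow> 'b::complete_linorder) \<Rightarrow> bool" where
  "lower_semicontinuous_on S f \<longleftrightarrow> (\<forall>x\<in>S. f x \<le> Liminf (at x within S) f)"

definition Dn :: "real \<Rightarrow> real \<Rightarrow> (nat \<Rightarrow> real) \<Rightarrow> nat \<Rightarrow> real set" where
  "Dn \<theta> l h n = {\<theta> - arctan (2 * h n / (real n * l)) .. \<theta> + arctan (2 * h n / (real n * l))}"

definition Dlow :: "real \<Rightarrow> real \<Rightarrow> (nat \<Rightarrow> real) \<Rightarrow> real set" where
  "Dlow \<theta> l h = (\<Union>N\<in>{1..}. \<Inter>n\<in>{N..}. Dn \<theta> l h n)"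

end

theory Submission
  imports Defs
begin

lemma lsc_closed:
  fixes f :: "real \<Rightarrow> ennreal"
  assumes lsc: "lower_semicontinuous_on I f" and cI: "closed I"
  shows "closed {t\<in>I. f t \<le> c}"
  unfolding closed_limpt
proof (intro allI impI)
  fix x assume lp: "x islimpt {t\<in>I. f t \<le> c}"
  hence "x islimpt I" by (rule islimpt_subset) auto
  hence xI: "x \<in> I" using cI closed_limpt by blast
  show "x \<in> {t\<in>I. f t \<le> c}"
  proof (rule ccontr)
    assume "x \<notin> {t\<in>I. f t \<le> c}"
    hence fx: "c < f x" using xI by auto
    have "f x \<le> Liminf (at x within I) f" using lsc xI unfolding lower_semicontinuous_on_def by auto
    hence "eventually (\<lambda>y. c < f y) (at x within I)" using fx le_Liminf_iff by blast
    then obtain e where e: "e > 0" "\<And>y. y \<in> I \<Longrightarrow> y \<noteq> x \<Longrightarrow> dist y x < e \<Longrightarrow> c < f y"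
      unfolding eventually_at by blast
    from lp e(1) obtain y where "y \<in> {t\<in>I. f t \<le> c}" "y \<noteq> x" "dist y x < e"
      unfolding islimpt_approachable by blast
    with e(2)[of y] show False by auto
  qed
qed

theorem lemma4:
  fixes \<theta> :: real and a b :: "real ^ 2" and h :: "nat \<Rightarrow> real" and f :: "real \<Rightarrow> ennreal"
  assumes "0 \<le> \<theta>" "\<theta> < pi"
    and "a \<noteq> b"
    and "\<And>n. h n > 0"
    and lsc: "lower_semicontinuous_on {\<theta> - pi/2 .. \<theta> + pi/2} f"
  shows "limsup (\<lambda>n. INF t\<in>Dn \<theta> (dist a b) h n. f t)
           \<ge> (INF t\<in>closure (Dlow \<theta> (dist a b) h). f t)"
proof -
  define I where "I = {\<theta> - pi/2 .. \<theta> + pi/2}"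
  define l where "l = dist a b"
  define \<alpha> where "\<alpha> n = arctan (2 * h n / (real n * l))" for n
  define m where "m = (INF t\<in>closure (Dlow \<theta> l h). f t)"
  have Dn_eq: "Dn \<theta> l h n = {\<theta> - \<alpha> n .. \<theta> + \<alpha> n}" for n
    unfolding Dn_def \<alpha>_def by simp
  have DnI: "Dn \<theta> l h n \<subseteq> I" for n
  proof -
    have "\<alpha> n < pi/2" unfolding \<alpha>_def by (rule arctan_ubound)
    thus ?thesis unfolding Dn_eq I_def by auto
  qed
  have main: "c \<le> limsup (\<lambda>n. INF t\<in>Dn \<theta> l h n. f t)" if cm: "c < m" for c
  proof -
    define K where "K = {t\<in>I. f t \<le> c}"
    have cK: "closed K" unfolding K_def
      by (rule lsc_closed) (use lsc in \<open>auto simp: I_def\<close>)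
    have compK: "compact K"
    proof -
      have "K \<subseteq> I" unfolding K_def by auto
      hence "bounded K" unfolding I_def by (rule bounded_subset[OF bounded_closed_interval, rotated])
      thus ?thesis using cK compact_eq_bounded_closed by blast
    qed
    show ?thesis
    proof (cases "K = {}")
      case True
      have "c \<le> (INF t\<in>Dn \<theta> l h n. f t)" for n
      proof (rule INF_greatest)
        fix t assume "t \<in> Dn \<theta> l h n"
        hence "t \<in> I" using DnI by auto
        thus "c \<le> f t" using True unfolding K_def by force
      qed
      thus ?thesis by (intro le_Limsup) auto
    next
      case False
      have "continuous_on K (\<lambda>t. \<bar>t - \<theta>\<bar>)" by (intro continuous_intros)
      from continuous_attains_inf[OF compK False this]
      obtain t0 where t0: "t0 \<in> K" "\<And>y. y \<in> K \<Longrightarrow> \<bar>t0 - \<theta>\<bar> \<le> \<bar>y - \<theta>\<bar>"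
        by metis
      have "t0 \<notin> closure (Dlow \<theta> l h)"
      proof
        assume "t0 \<in> closure (Dlow \<theta> l h)"
        hence "m \<le> f t0" unfolding m_def by (rule INF_lower)
        moreover have "f t0 \<le> c" using t0 unfolding K_def by auto
        ultimately show False using cm by auto
      qed
      hence t0D: "t0 \<notin> Dlow \<theta> l h" using closure_subset by blast
      have freq: "\<exists>\<^sub>F n in sequentially. \<alpha> n < \<bar>t0 - \<theta>\<bar>"
      proof (rule ccontr)
        assume "\<not> ?thesis"
        hence "eventually (\<lambda>n. \<bar>t0 - \<theta>\<bar> \<le> \<alpha> n) sequentially"
          by (simp add: not_frequently not_less)
        then obtain N where N: "\<And>n. n \<ge> N \<Longrightarrow> \<bar>t0 - \<theta>\<bar> \<le> \<alpha> n"
          unfolding eventually_sequentially by blast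
        have "t0 \<in> (\<Inter>n\<in>{max N 1..}. Dn \<theta> l h n)"
        proof (intro INT_I)
          fix n assume "n \<in> {max N 1..}"
          hence "\<bar>t0 - \<theta>\<bar> \<le> \<alpha> n" using N by auto
          thus "t0 \<in> Dn \<theta> l h n" unfolding Dn_eq by (simp add: abs_le_iff)
        qed
        hence "t0 \<in> Dlow \<theta> l h" unfolding Dlow_def by auto
        thus False using t0D by auto
      qed
      have "\<exists>\<^sub>F n in sequentially. c \<le> (INF t\<in>Dn \<theta> l h n. f t)"
      proof (rule frequently_elim1[OF freq])
        fix n assume an: "\<alpha> n < \<bar>t0 - \<theta>\<bar>"
        show "c \<le> (INF t\<in>Dn \<theta> l h n. f t)"
        proof (rule INF_greatest)
          fix t assume tD: "t \<in> Dn \<theta> l h n"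
          hence "t \<in> I" using DnI by auto
          moreover have "\<bar>t - \<theta>\<bar> < \<bar>t0 - \<theta>\<bar>" using tD an unfolding Dn_eq by auto
          ultimately have "t \<notin> K" using t0(2) by force
          thus "c \<le> f t" using \<open>t \<in> I\<close> unfolding K_def by auto
        qed
      qed
      note fr = this
      show ?thesis unfolding Limsup_def
      proof (rule INF_greatest, clarsimp)
        fix P assume "eventually P sequentially"
        from frequently_eventually_conj[OF fr this]
        obtain n where "c \<le> (INF t\<in>Dn \<theta> l h n. f t)" "P n"
          using frequently_ex by blast
        thus "c \<le> (SUP n\<in>Collect P. INF t\<in>Dn \<theta> l h n. f t)"
          by (meson SUP_upper2 mem_Collect_eq)
      qed
    qed
  qed
  have "m \<le> limsup (\<lambda>n. INF t\<in>Dn \<theta> l h n. f t)"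
    by (rule dense_le) (rule main)
  thus ?thesis unfolding m_def l_def by simp
qed

end
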